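(* Let $h\ge 0$ and $0\le k\le h$. The generating function $f_k^{(h)}(z)=\sum_{n\ge 0} a^{(h)}_{n,k}z^n$ satisfies $$f_k^{(h)}(z)=z^k\,\frac{d_{h-k}}{d_{h+1}},$$ where $a^{(h)}_{n,k}$ is the number of partial ternary paths of length $n$ ending at level $k$ all of whose ordinates are at most $h$, and the polynomials $d_j=d_j(z)$ are defined by $\sum_{j\ge 0}d_jX^j=\dfrac{1}{1-X+z^3X^3}$ (equivalently $d_0=d_1=d_2=1$, $d_j=d_{j-1}-z^3d_{j-3}$ for $j\ge 3$).
   Context: A partial ternary path of length $n$ is a lattice path $(0,c_0),\dots,(n,c_n)$ with $c_0=0$, steps $(1,1)$ or $(1,-2)$, and all $c_j\ge 0$; it ends at level $c_n$. *)

theory Defs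
  imports "HOL-Computational_Algebra.Polynomial_FPS"
begin

definition partial_ternary_path :: "nat \<Rightarrow> int list \<Rightarrow> bool" where
  "partial_ternary_path n c \<longleftrightarrow>
     length c = Suc n \<and> c ! 0 = 0 \<and>
     (\<forall>j<n. c ! (Suc j) - c ! j = 1 \<or> c ! (Suc j) - c ! j = -2) \<and>
     (\<forall>j\<le>n. c ! j \<ge> 0)"

definition a_count :: "nat \<Rightarrow> nat \<Rightarrow> nat \<Rightarrow> nat" where
  "a_count h n k = card {c. partial_ternary_path n c \<and> c ! n = int k \<and>
                             (\<forall>j\<le>n. c ! j \<le> int h)}"

fun d :: "nat \<Rightarrow> rat poly" where
  "d 0 = 1"
| "d (Suc 0) = 1"
| "d (Suc (Suc 0)) = 1"
| "d (Suc (Suc (Suc j))) = d (Suc (Suc j)) - monom 1 3 * d j"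

end

theory Submission
  imports Defs
begin

lemma d_const: "poly (d j) 0 = 1"
  by (induction j rule: d.induct) (simp_all add: poly_monom)

lemma d_coeff0 [simp]: "coeff (d j) 0 = 1"
  using d_const[of j] by (simp add: poly_0_coeff_0)

lemma E_rec: "fps_of_poly (d j) = fps_of_poly (d (Suc j)) +
   (if 2 \<le> j then fps_X^3 * fps_of_poly (d (j-2)) else (0::rat fps))"
proof (cases j)
  case 0 then show ?thesis by simp
next
  case (Suc m) then show ?thesis
  proof (cases m)
    case 0 then show ?thesis using Suc by simp
  next
    case (Suc m') then show ?thesis using \<open>j = Suc m\<close>
      by (simp add: fps_of_poly_diff fps_of_poly_mult fps_of_poly_monom')
  qed
qed

definition S :: "nat \<Rightarrow> nat \<Rightarrow> int \<Rightarrow> int list set" where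
  "S h n k = {c. partial_ternary_path n c \<and> c ! n = k \<and> (\<forall>j\<le>n. c ! j \<le> int h)}"

lemma S_finite: "finite (S h n k)"
proof -
  have "S h n k \<subseteq> {xs. set xs \<subseteq> {0..int h} \<and> length xs = Suc n}"
  proof
    fix c assume c: "c \<in> S h n k"
    then have l: "length c = Suc n" by (simp add: S_def partial_ternary_path_def)
    have "set c \<subseteq> {0..int h}"
    proof
      fix x assume "x \<in> set c"
      then obtain j where "j < length c" "c ! j = x" by (auto simp: in_set_conv_nth)
      then show "x \<in> {0..int h}" using c l by (auto simp: S_def partial_ternary_path_def)
    qed
    then show "c \<in> {xs. set xs \<subseteq> {0..int h} \<and> length xs = Suc n}" using l by simp
  qed
  moreover have "finite {xs. set xs \<subseteq> {0..int h} \<and> length xs = Suc n}"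
    by (rule finite_lists_length_eq) simp
  ultimately show ?thesis by (rule finite_subset)
qed

lemma S_out: "k < 0 \<or> k > int h \<Longrightarrow> S h n k = {}"
  by (force simp: S_def partial_ternary_path_def)

lemma S_0: "S h 0 k = (if k = 0 then {[0]} else {})"
proof -
  have "c \<in> S h 0 k \<longleftrightarrow> c = [0] \<and> k = 0" for c
  proof
    assume "c \<in> S h 0 k"
    then have "length c = 1" "c ! 0 = 0" "c ! 0 = k"
      by (auto simp: S_def partial_ternary_path_def)
    then show "c = [0] \<and> k = 0"
      by (cases c) auto
  qed (auto simp: S_def partial_ternary_path_def)
  then show ?thesis by auto
qed

lemma S_Suc:
  assumes "0 \<le> k" "k \<le> int h"
  shows "S h (Suc n) k = (\<lambda>c. c @ [k]) ` (S h n (k-1) \<union> S h n (k+2))"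
proof (intro equalityI subsetI)
  fix c assume c: "c \<in> S h (Suc n) k"
  let ?c = "butlast c"
  have l: "length c = Suc (Suc n)" using c by (simp add: S_def partial_ternary_path_def)
  have ck0: "c ! Suc n = k" using c by (simp add: S_def)
  have ne: "c \<noteq> []" using l by auto
  have "last c = k" using ck0 l ne by (simp add: last_conv_nth)
  then have ce: "c = ?c @ [k]" using append_butlast_last_id[OF ne] by simp
  have nth: "?c ! j = c ! j" if "j \<le> n" for j using that l by (simp add: nth_butlast)
  have allst: "\<forall>j<Suc n. c ! Suc j - c ! j = 1 \<or> c ! Suc j - c ! j = -2"
    using c by (simp add: S_def partial_ternary_path_def)
  have st: "c ! Suc n - c ! n = 1 \<or> c ! Suc n - c ! n = -2"
    using allst[rule_format, of n] by simp
  have ck: "c ! Suc n = k" using c by (simp add: S_def)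
  have "?c \<in> S h n (c ! n)"
    using c l nth unfolding S_def partial_ternary_path_def
    by (auto simp: nth_butlast)
  moreover have "c ! n = k - 1 \<or> c ! n = k + 2" using st ck by auto
  ultimately show "c \<in> (\<lambda>c. c @ [k]) ` (S h n (k-1) \<union> S h n (k+2))"
    using ce by (metis UnI1 UnI2 image_eqI)
next
  fix c assume "c \<in> (\<lambda>c. c @ [k]) ` (S h n (k-1) \<union> S h n (k+2))"
  then obtain c' where c: "c = c' @ [k]" and c': "c' \<in> S h n (k-1) \<union> S h n (k+2)" by blast
  have l: "length c' = Suc n" using c' by (auto simp: S_def partial_ternary_path_def)
  have e: "c' ! n = k - 1 \<or> c' ! n = k + 2" using c' by (auto simp: S_def)
  have p: "partial_ternary_path n c'" "\<forall>j\<le>n. c' ! j \<le> int h"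
    using c' by (auto simp: S_def)
  have n1: "c ! j = c' ! j" if "j \<le> n" for j using that l c by (simp add: nth_append)
  have n2: "c ! Suc n = k" using l c by (simp add: nth_append)
  have "partial_ternary_path (Suc n) c"
    unfolding partial_ternary_path_def
  proof (intro conjI allI impI)
    show "length c = Suc (Suc n)" using l c by simp
    show "c ! 0 = 0" using n1[of 0] p by (simp add: partial_ternary_path_def)
    fix j assume "j < Suc n"
    then show "c ! Suc j - c ! j = 1 \<or> c ! Suc j - c ! j = - 2"
      using p n1 n2 e by (cases "j = n") (auto simp: partial_ternary_path_def)
  next
    fix j assume "j \<le> Suc n"
    then show "0 \<le> c ! j"
      using p n1 n2 assms by (cases "j = Suc n") (auto simp: partial_ternary_path_def)
  qed
  moreover have "\<forall>j\<le>Suc n. c ! j \<le> int h"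
    using p n1 n2 assms by (metis le_Suc_eq)
  ultimately show "c \<in> S h (Suc n) k" using n2 by (simp add: S_def)
qed

lemma card_S_Suc:
  assumes "0 \<le> k" "k \<le> int h"
  shows "card (S h (Suc n) k) = card (S h n (k-1)) + card (S h n (k+2))"
proof -
  have inj: "inj_on (\<lambda>c. c @ [k]) A" for A by (rule inj_onI) simp
  have dis: "S h n (k-1) \<inter> S h n (k+2) = {}" by (auto simp: S_def)
  show ?thesis
    unfolding S_Suc[OF assms]
    by (simp add: card_image[OF inj] card_Un_disjoint[OF S_finite S_finite dis])
qed

definition G :: "nat \<Rightarrow> int \<Rightarrow> rat fps" where
  "G h k = (if 0 \<le> k \<and> k \<le> int h then fps_X ^ nat k * fps_of_poly (d (h - nat k)) else 0)"

lemma G_rec: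
  assumes "0 \<le> k" "k \<le> int h"
  shows "G h k = (if k = 0 then fps_of_poly (d (h+1)) else 0)
           + fps_X * G h (k-1) + fps_X * G h (k+2)"
proof -
  obtain m where m: "k = int m" using assms(1) by (metis nonneg_eq_int)
  have mh: "m \<le> h" using assms m by simp
  have er: "fps_of_poly (d (h-m)) = fps_of_poly (d (Suc (h-m))) +
     (if 2 \<le> h - m then fps_X^3 * fps_of_poly (d (h-m-2)) else 0)"
    by (rule E_rec)
  show ?thesis
  proof (cases m)
    case 0
    then show ?thesis using m mh er
      by (auto simp: G_def power_add numeral_3_eq_3 numeral_2_eq_2 mult_ac nat_add_distrib)
  next
    case (Suc m')
    have a: "nat (k - 1) = m'" using m Suc by simp
    have b: "h - m' = Suc (h - m)" using Suc mh by simp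
    have c: "nat (k+2) = m + 2" using m by simp
    have e: "(h - (m+2)) = h - m - 2" by simp
    have g1: "G h (k-1) = fps_X^m' * fps_of_poly (d (Suc (h-m)))"
      using m mh Suc a b unfolding G_def by simp
    have g2: "G h (k+2) = (if 2 \<le> h - m then fps_X^(m+2) * fps_of_poly (d (h-m-2)) else 0)"
      using m mh c e unfolding G_def by auto
    have "G h k = fps_X ^ m * fps_of_poly (d (h-m))" using m mh by (simp add: G_def)
    also have "\<dots> = fps_X * (fps_X^m' * fps_of_poly (d (Suc (h-m)))) +
        (if 2 \<le> h - m then fps_X * (fps_X^(m+2) * fps_of_poly (d (h-m-2))) else 0)"
      by (subst er) (simp add: Suc algebra_simps power_add numeral_3_eq_3 numeral_2_eq_2)
    also have "\<dots> = fps_X * G h (k-1) + fps_X * G h (k+2)"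
      unfolding g1 g2 by simp
    finally show ?thesis using m Suc by simp
  qed
qed

definition H :: "nat \<Rightarrow> int \<Rightarrow> rat fps" where
  "H h k = G h k / fps_of_poly (d (h+1))"

lemma D0: "fps_nth (fps_of_poly (d j)) 0 = (1::rat)"
  using d_const[of j] by (simp add: poly_0_coeff_0)

lemma H_rec:
  assumes "0 \<le> k" "k \<le> int h"
  shows "H h k = (if k = 0 then 1 else 0) + fps_X * H h (k-1) + fps_X * H h (k+2)"
proof -
  let ?D = "fps_of_poly (d (h+1))"
  have dv: "f / ?D = f * inverse ?D" for f by (rule fps_divide_unit) (simp add: D0)
  have inv: "fps_of_poly (d (Suc h)) * inverse (fps_of_poly (d (Suc h))) = 1"
    by (rule inverse_mult_eq_1') simp
  show ?thesis
    unfolding H_def dv G_rec[OF assms]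
    by (simp add: algebra_simps inv)
qed

lemma H_out: "k < 0 \<or> k > int h \<Longrightarrow> H h k = 0"
  by (auto simp: H_def G_def)

lemma main_count: "of_nat (card (S h n k)) = fps_nth (H h k) n"
proof (induction n arbitrary: k)
  case 0
  show ?case
  proof (cases "0 \<le> k \<and> k \<le> int h")
    case True
    have "fps_nth (H h k) 0 = (if k = 0 then 1 else 0)"
      by (subst H_rec) (use True in auto)
    then show ?thesis by (simp add: S_0)
  next
    case False then have "k < 0 \<or> k > int h" by auto
    then show ?thesis by (simp add: S_out H_out)
  qed
next
  case (Suc n)
  show ?case
  proof (cases "0 \<le> k \<and> k \<le> int h")
    case True
    have "fps_nth (H h k) (Suc n) = fps_nth (H h (k-1)) n + fps_nth (H h (k+2)) n"
      by (subst H_rec) (use True in \<open>auto simp: fps_X_mult_nth\<close>)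
    then show ?thesis using True by (simp add: card_S_Suc Suc.IH)
  next
    case False then have "k < 0 \<or> k > int h" by auto
    then show ?thesis by (simp add: S_out H_out)
  qed
qed

theorem mainTheorem4:
  fixes h k :: nat
  assumes "k \<le> h"
  shows "Abs_fps (\<lambda>n. of_nat (a_count h n k) :: rat)
         = fps_X ^ k * fps_of_poly (d (h - k)) / fps_of_poly (d (h + 1))"
proof (rule fps_ext)
  fix n
  have "of_nat (a_count h n k) = fps_nth (H h (int k)) n"
    using main_count[of h n "int k"] by (simp add: a_count_def S_def)
  then show "fps_nth (Abs_fps (\<lambda>n. of_nat (a_count h n k) :: rat)) n =
      fps_nth (fps_X ^ k * fps_of_poly (d (h - k)) / fps_of_poly (d (h + 1))) n"
    using assms by (simp add: H_def G_def)
qed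

end
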